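(* Let $\Theta\subset\mathbb{R}^d$ be open and bounded, let $(X_{\mathcal D},\Pi_{\mathcal D},\nabla_{\mathcal D})$ be a gradient discretisation with piecewise constant reconstruction as described in the context, let $\delta t>0$, and let $\zeta:\mathbb{R}\to\mathbb{R}$ be non-decreasing and Lipschitz continuous with $\zeta(0)=0$ and $0\le\zeta'\le L_\zeta$ a.e. Let $L\ge L_\zeta/2$ and let $r\in L^2(\Theta)$ be a fixed function (in the scheme, $r=\Pi_{\mathcal D}u^{n-1}+f(\zeta(\Pi_{\mathcal D}u^{n-1}))\Delta^nW$ for a fixed realisation). Suppose $u^n\in X_{\mathcal D}$ satisfies $$\langle \Pi_{\mathcal D}u^n,\Pi_{\mathcal D}\varphi\rangle+\delta t\,\langle\nabla_{\mathcal D}\zeta(u^n),\nabla_{\mathcal D}\varphi\rangle=\langle r,\Pi_{\mathcal D}\varphi\rangle\quad\forall\varphi\in X_{\mathcal D}.$$ Let $u^{n,0}\in X_{\mathcal D}$ be arbitrary and define $(u^{n,i})_{i\ge1}\subset X_{\mathcal D}$ by: $u^{n,i}$ is the solution of $$\langle \Pi_{\mathcal D}u^{n,i},\Pi_{\mathcal D}\varphi\rangle+\delta t\,L\,\langle\nabla_{\mathcal D}u^{n,i},\nabla_{\mathcal D}\varphi\rangle=\delta t\,\langle L\nabla_{\mathcal D}u^{n,i-1}-\nabla_{\mathcal D}\zeta(u^{n,i-1}),\nabla_{\mathcal D}\varphi\rangle+\langle r,\Pi_{\mathcal D}\varphi\rangle\quad\forall\varphi\in X_{\mathcal D}.$$ Then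 $\|\Pi_{\mathcal D}u^{n,i}-\Pi_{\mathcal D}u^n\|_{*,\mathcal D}\to0$ as $i\to\infty$.
   Context: A gradient discretisation with piecewise constant reconstruction consists of: a finite-dimensional real vector space $X_{\mathcal D}$ with basis $(\mathbf e_j)_{j\in B}$ ($B$ a finite index set); a family of disjoint measurable subsets $(\Theta_j)_{j\in B}$ of $\Theta$ and the linear map $\Pi_{\mathcal D}:X_{\mathcal D}\to L^\infty(\Theta)$, $\Pi_{\mathcal D}v=\sum_{j\in B}v_j\mathbf 1_{\Theta_j}$ for $v=\sum_j v_j\mathbf e_j$; and a linear map $\nabla_{\mathcal D}:X_{\mathcal D}\to L^2(\Theta)^d$ such that $v\mapsto\|\nabla_{\mathcal D}v\|_{L^2(\Theta)}$ is a norm on $X_{\mathcal D}$. For $g:\mathbb{R}\to\mathbb{R}$ with $g(0)=0$ and $v=(v_j)_{j\in B}\in X_{\mathcal D}$, set $g(v):=(g(v_j))_{j\in B}\in X_{\mathcal D}$; then $\Pi_{\mathcal D}g(v)=g(\Pi_{\mathcal D}v)$. $\langle\cdot,\cdot\rangle$ denotes the $L^2(\Theta)$ (or $L^2(\Theta)^d$) inner product and $\|\cdot\|$ its norm. The discrete dual norm on $\Pi_{\mathcal D}(X_{\mathcal D})$ is $\|v\|_{*,\mathcal D}:=\sup\{\int_\Theta v\,\Pi_{\mathcal D}w\,dx: w\in X_{\mathcal D},\ \|\nabla_{\mathcal D}w\|=1\}$. *)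

theory Defs
  imports "HOL-Analysis.Analysis"
begin

definition L2 :: "'a::euclidean_space set \<Rightarrow> ('a \<Rightarrow> 'c::real_normed_vector) \<Rightarrow> bool" where
  "L2 \<Theta> f \<longleftrightarrow> f \<in> borel_measurable (lebesgue_on \<Theta>)
       \<and> integrable (lebesgue_on \<Theta>) (\<lambda>x. (norm (f x))\<^sup>2)"

definition innerL2 :: "'a::euclidean_space set \<Rightarrow> ('a \<Rightarrow> real) \<Rightarrow> ('a \<Rightarrow> real) \<Rightarrow> real" where
  "innerL2 \<Theta> f g = (\<integral>x. f x * g x \<partial>(lebesgue_on \<Theta>))"

definition innerL2v :: "'a::euclidean_space set \<Rightarrow> ('a \<Rightarrow> 'a) \<Rightarrow> ('a \<Rightarrow> 'a) \<Rightarrow> real" where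
  "innerL2v \<Theta> F G = (\<integral>x. F x \<bullet> G x \<partial>(lebesgue_on \<Theta>))"

text \<open>Piecewise constant reconstruction; X_D is identified with 'b \<Rightarrow> real for a finite index type 'b
  (coordinates with respect to the basis (e_j)).\<close>
definition PiD :: "('b::finite \<Rightarrow> 'a::euclidean_space set) \<Rightarrow> ('b \<Rightarrow> real) \<Rightarrow> 'a \<Rightarrow> real" where
  "PiD \<Theta>s v = (\<lambda>x. \<Sum>j\<in>UNIV. v j * indicator (\<Theta>s j) x)"

definition grad_disc_pc ::
  "'a::euclidean_space set \<Rightarrow> ('b::finite \<Rightarrow> 'a set) \<Rightarrow> (('b \<Rightarrow> real) \<Rightarrow> 'a \<Rightarrow> 'a) \<Rightarrow> bool" where
  "grad_disc_pc \<Theta> \<Theta>s G \<longleftrightarrow>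
     disjoint_family \<Theta>s \<and> (\<forall>j. \<Theta>s j \<in> sets lebesgue \<and> \<Theta>s j \<subseteq> \<Theta>)
     \<and> (\<forall>a v w. G (\<lambda>j. a * v j + w j) = (\<lambda>x. a *\<^sub>R G v x + G w x))
     \<and> (\<forall>v. L2 \<Theta> (G v))
     \<and> (\<forall>v. innerL2v \<Theta> (G v) (G v) = 0 \<longrightarrow> v = (\<lambda>_. 0))"

definition dual_normD ::
  "'a::euclidean_space set \<Rightarrow> ('b::finite \<Rightarrow> 'a set) \<Rightarrow> (('b \<Rightarrow> real) \<Rightarrow> 'a \<Rightarrow> 'a) \<Rightarrow> ('a \<Rightarrow> real) \<Rightarrow> real" where
  "dual_normD \<Theta> \<Theta>s G f =
     Sup {innerL2 \<Theta> f (PiD \<Theta>s w) | w. sqrt (innerL2v \<Theta> (G w) (G w)) = 1}"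

end

theory Submission
  imports Defs
begin

lemma slope_bound:
  fixes \<zeta> :: "real \<Rightarrow> real"
  assumes mono: "mono \<zeta>" and lip: "K-lipschitz_on UNIV \<zeta>"
    and ae: "AE x in lborel. \<zeta> differentiable (at x) \<and> 0 \<le> deriv \<zeta> x \<and> deriv \<zeta> x \<le> Lz"
    and ab: "a \<le> b"
  shows "\<zeta> b - \<zeta> a \<le> Lz * (b - a)"
proof -
  from ae obtain N where N: "{x \<in> space lborel. \<not> (\<zeta> differentiable (at x) \<and> 0 \<le> deriv \<zeta> x \<and> deriv \<zeta> x \<le> Lz)} \<subseteq> N" "N \<in> null_sets lborel"
    using ae unfolding eventually_ae_filter by blast
  have Nleb: "N \<in> null_sets lebesgue" using N(2) by (simp add: null_sets_completionI)
  define S where "S = {a..b} - N"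
  define g where "g = (\<lambda>x. \<zeta> x + x)"
  have Ssets: "S \<in> sets lebesgue" unfolding S_def using Nleb by auto
  have good: "\<zeta> differentiable (at x) \<and> 0 \<le> deriv \<zeta> x \<and> deriv \<zeta> x \<le> Lz" if "x \<in> S" for x
    using N(1) that unfolding S_def by auto
  have der: "(g has_field_derivative (deriv \<zeta> x + 1)) (at x within S)" if "x \<in> S" for x
  proof -
    have "(\<zeta> has_field_derivative deriv \<zeta> x) (at x)"
      using good[OF that] by (simp add: DERIV_deriv_iff_real_differentiable)
    then have "(g has_field_derivative (deriv \<zeta> x + 1)) (at x)"
      unfolding g_def by (auto intro!: derivative_eq_intros)
    then show ?thesis by (rule has_field_derivative_at_within)
  qed
  have gmono: "g x < g y" if "x < y" for x y
  proof -
    have "\<zeta> x \<le> \<zeta> y" using mono that by (simp add: mono_def)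
    then show ?thesis using that by (simp add: g_def)
  qed
  have inj: "inj_on g S"
  proof (rule inj_onI)
    fix x y assume "g x = g y"
    then show "x = y" using gmono[of x y] gmono[of y x] by (cases x y rule: linorder_cases) auto
  qed
  have diffS: "g differentiable_on S"
    using der by (auto simp: differentiable_on_def real_differentiable_def)
  have gSsets: "g ` S \<in> sets lebesgue"
    by (rule differentiable_image_in_sets_lebesgue[OF Ssets _ diffS]) simp
  have gS_sub: "g ` S \<subseteq> {g a..g b}"
  proof
    fix y assume "y \<in> g ` S"
    then obtain x where "x \<in> S" "y = g x" by auto
    then have "a \<le> x" "x \<le> b" unfolding S_def by auto
    have "g a \<le> g x" using gmono[of a x] \<open>a \<le> x\<close> by (cases "a = x") auto
    moreover have "g x \<le> g b" using gmono[of x b] \<open>x \<le> b\<close> by (cases "x = b") auto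
    ultimately show "y \<in> {g a..g b}" using \<open>y = g x\<close> by simp
  qed
  have gSlm: "g ` S \<in> lmeasurable"
    using gSsets gS_sub by (meson bounded_closed_interval bounded_subset bounded_set_imp_lmeasurable)
  have one_int: "(\<lambda>x. 1::real) absolutely_integrable_on g ` S"
    using gSlm lmeasurable_iff_integrable_on absolutely_integrable_on_iff_nonneg by auto
  note cov = has_absolute_integral_change_of_variables_1'[OF Ssets der inj, of "\<lambda>_. 1" "integral (g ` S) (\<lambda>_. 1)"]
  then have L1: "(\<lambda>x. \<bar>deriv \<zeta> x + 1\<bar>) absolutely_integrable_on S"
     and L2: "integral S (\<lambda>x. \<bar>deriv \<zeta> x + 1\<bar>) = measure lebesgue (g ` S)"
    using one_int lmeasure_integral[OF gSlm] by simp_all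
  have Slm: "S \<in> lmeasurable"
  proof (rule bounded_set_imp_lmeasurable[OF _ Ssets])
    show "bounded S" unfolding S_def by (rule bounded_subset[OF bounded_closed_interval]) auto
  qed
  have "integral S (\<lambda>x. \<bar>deriv \<zeta> x + 1\<bar>) \<le> integral S (\<lambda>x. Lz + 1)"
  proof (rule integral_le)
    show "(\<lambda>x. \<bar>deriv \<zeta> x + 1\<bar>) integrable_on S" using L1 by (simp add: absolutely_integrable_on_def)
    have "(\<lambda>x. 1::real) integrable_on S" using Slm lmeasurable_iff_integrable_on by blast
    from integrable_on_cmult_left[OF this, of "Lz + 1"]
    show "(\<lambda>x. Lz + 1) integrable_on S" by simp
    show "\<And>x. x \<in> S \<Longrightarrow> \<bar>deriv \<zeta> x + 1\<bar> \<le> Lz + 1" using good by auto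
  qed
  moreover have "integral S (\<lambda>x. Lz + 1) = (Lz + 1) * measure lebesgue S"
  proof -
    have "integral S (\<lambda>x. (Lz + 1) * 1) = (Lz + 1) * integral S (\<lambda>x. 1)"
      by (rule integral_mult_right)
    then show ?thesis using lmeasure_integral[OF Slm] by simp
  qed
  moreover have mS: "measure lebesgue S \<le> b - a"
  proof -
    have "measure lebesgue S \<le> measure lebesgue {a..b}"
      by (rule measure_mono_fmeasurable) (use Ssets in \<open>auto simp: S_def\<close>)
    then show ?thesis using ab by simp
  qed
  moreover have Lz0: "0 \<le> Lz"
  proof (rule ccontr)
    assume nz: "\<not> 0 \<le> Lz"
    have "AE x::real in lborel. False" using ae by (rule eventually_mono) (use nz in auto)
    then have "ae_filter (lborel::real measure) = bot" by (simp add: trivial_limit_def)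
    then have "emeasure (lborel::real measure) UNIV = 0" by (simp add: ae_filter_eq_bot_iff)
    then show False by simp
  qed
  ultimately have m1: "measure lebesgue (g ` S) \<le> (Lz + 1) * (b - a)"
    using L2 by (smt (verit) mult_left_mono)
  define T where "T = g ` (N \<inter> {a..b})"
  have Tnull: "T \<in> null_sets lebesgue"
  proof -
    have "negligible (N \<inter> {a..b})"
      using Nleb negligible_iff_null_sets negligible_subset by (metis inf_le1)
    moreover have "\<exists>U B. open U \<and> x \<in> U \<and> (\<forall>y \<in> (N \<inter> {a..b}) \<inter> U. norm (g y - g x) \<le> B * norm (y - x))" for x
    proof (intro exI[of _ UNIV] exI[of _ "K + 1"] conjI ballI)
      fix y
      have "dist (\<zeta> y) (\<zeta> x) \<le> K * dist y x" by (rule lipschitz_onD[OF lip]) auto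
      then have "\<bar>\<zeta> y - \<zeta> x\<bar> \<le> K * \<bar>y - x\<bar>" by (simp add: dist_real_def)
      then show "norm (g y - g x) \<le> (K + 1) * norm (y - x)"
        unfolding g_def by (simp add: algebra_simps)
    qed auto
    ultimately have "negligible T" unfolding T_def
      by (intro negligible_locally_Lipschitz_image) auto
    then show ?thesis by (simp add: negligible_iff_null_sets)
  qed
  have contg: "continuous_on {a..b} g"
  proof -
    have "continuous_on UNIV \<zeta>" using lip by (rule lipschitz_on_continuous_on)
    then show ?thesis unfolding g_def
      by (auto intro!: continuous_intros intro: continuous_on_subset)
  qed
  have sub: "{g a..g b} \<subseteq> g ` S \<union> T"
  proof
    fix y assume "y \<in> {g a..g b}"
    then obtain x where x: "a \<le> x" "x \<le> b" "g x = y"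
      using IVT'[of g a y b, OF _ _ ab contg] by auto
    then show "y \<in> g ` S \<union> T" unfolding S_def T_def by auto
  qed
  have "g b - g a = measure lebesgue {g a..g b}"
    using gmono[of a b] ab by (cases "a = b") auto
  also have "\<dots> \<le> measure lebesgue (g ` S \<union> T)"
  proof (rule measure_mono_fmeasurable[OF sub])
    show "{g a..g b} \<in> sets lebesgue" by simp
    show "g ` S \<union> T \<in> fmeasurable lebesgue"
      using gSlm fmeasurableI_null_sets[OF Tnull] by (rule fmeasurable.Un)
  qed
  also have "\<dots> = measure lebesgue (g ` S)"
    using gSsets Tnull by (rule measure_Un_null_set)
  finally show ?thesis using m1 unfolding g_def by (simp add: algebra_simps)
qed
lemma ab_le: "\<bar>a * b\<bar> \<le> a\<^sup>2 + (b::real)\<^sup>2"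
proof -
  have "0 \<le> (\<bar>a\<bar> - \<bar>b\<bar>)\<^sup>2" by simp
  also have "(\<bar>a\<bar> - \<bar>b\<bar>)\<^sup>2 = a\<^sup>2 + b\<^sup>2 - 2 * \<bar>a * b\<bar>"
    by (simp add: power2_eq_square abs_mult algebra_simps)
  finally show ?thesis by (smt (verit) abs_ge_zero)
qed

lemma int_prod_real:
  fixes f g :: "'x \<Rightarrow> real"
  assumes "f \<in> borel_measurable M" "g \<in> borel_measurable M"
    "integrable M (\<lambda>x. (f x)\<^sup>2)" "integrable M (\<lambda>x. (g x)\<^sup>2)"
  shows "integrable M (\<lambda>x. f x * g x)"
proof (rule Bochner_Integration.integrable_bound[where f="\<lambda>x. (f x)\<^sup>2 + (g x)\<^sup>2"])
  show "integrable M (\<lambda>x. (f x)\<^sup>2 + (g x)\<^sup>2)" using assms by simp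
  show "(\<lambda>x. f x * g x) \<in> borel_measurable M" using assms by measurable
  show "AE x in M. norm (f x * g x) \<le> norm ((f x)\<^sup>2 + (g x)\<^sup>2)"
    using ab_le by (intro AE_I2) (simp add: add_nonneg_nonneg)
qed

lemma int_prod_vec:
  fixes f g :: "'x \<Rightarrow> 'a::euclidean_space"
  assumes "f \<in> borel_measurable M" "g \<in> borel_measurable M"
    "integrable M (\<lambda>x. (norm (f x))\<^sup>2)" "integrable M (\<lambda>x. (norm (g x))\<^sup>2)"
  shows "integrable M (\<lambda>x. f x \<bullet> g x)"
proof (rule Bochner_Integration.integrable_bound[where f="\<lambda>x. (norm (f x))\<^sup>2 + (norm (g x))\<^sup>2"])
  show "integrable M (\<lambda>x. (norm (f x))\<^sup>2 + (norm (g x))\<^sup>2)" using assms by simp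
  show "(\<lambda>x. f x \<bullet> g x) \<in> borel_measurable M" using assms by measurable
  show "AE x in M. norm (f x \<bullet> g x) \<le> norm ((norm (f x))\<^sup>2 + (norm (g x))\<^sup>2)"
  proof (intro AE_I2)
    fix x
    have "\<bar>f x \<bullet> g x\<bar> \<le> norm (f x) * norm (g x)" by (rule Cauchy_Schwarz_ineq2)
    also have "\<dots> \<le> (norm (f x))\<^sup>2 + (norm (g x))\<^sup>2" using ab_le[of "norm (f x)" "norm (g x)"] by simp
    finally show "norm (f x \<bullet> g x) \<le> norm ((norm (f x))\<^sup>2 + (norm (g x))\<^sup>2)" by simp
  qed
qed

lemma lin_zero:
  assumes "\<forall>c x y. f (\<lambda>j. c * x j + y j) = c * f x + (f y :: real)"
  shows "f (\<lambda>_. 0) = 0"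
  using assms[rule_format, of 1 "\<lambda>_. 0" "\<lambda>_. 0"] by simp

lemma lin_diff:
  assumes "\<forall>c x y. f (\<lambda>j. c * x j + y j) = c * f x + (f y :: real)"
  shows "f (\<lambda>j. x j - y j) = f x - f y"
  using assms[rule_format, of "-1" y x] by simp

lemma lin_scale:
  assumes "\<forall>c x y. f (\<lambda>j. c * x j + y j) = c * f x + (f y :: real)"
  shows "f (\<lambda>j. c * x j) = c * f x"
  using assms[rule_format, of c x "\<lambda>_. 0"] lin_zero[OF assms] by simp

lemma lin_expand:
  fixes f :: "('b::finite \<Rightarrow> real) \<Rightarrow> real"
  assumes lin: "\<forall>c x y. f (\<lambda>j. c * x j + y j) = c * f x + f y"
  shows "f w = (\<Sum>k\<in>UNIV. w k * f (\<lambda>j. if j = k then 1 else 0))"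
proof -
  define \<delta> :: "'b \<Rightarrow> 'b \<Rightarrow> real" where "\<delta> = (\<lambda>k j. if j = k then 1 else 0)"
  have ind: "f (\<lambda>j. \<Sum>k\<in>F. w k * \<delta> k j) = (\<Sum>k\<in>F. w k * f (\<delta> k))"
    if "finite F" for F
    using that
  proof (induction F rule: finite_induct)
    case empty
    then show ?case using lin_zero[OF lin] by simp
  next
    case (insert k F)
    have "(\<lambda>j. \<Sum>k'\<in>insert k F. w k' * \<delta> k' j) = (\<lambda>j. w k * \<delta> k j + (\<Sum>k'\<in>F. w k' * \<delta> k' j))"
      using insert.hyps by simp
    then have "f (\<lambda>j. \<Sum>k'\<in>insert k F. w k' * \<delta> k' j) = w k * f (\<delta> k) + f (\<lambda>j. \<Sum>k'\<in>F. w k' * \<delta> k' j)"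
      using lin[rule_format, of "w k" "\<delta> k" "\<lambda>j. \<Sum>k'\<in>F. w k' * \<delta> k' j"] by simp
    then show ?case using insert.IH insert.hyps by simp
  qed
  have eq: "(\<lambda>j. \<Sum>k\<in>UNIV. w k * \<delta> k j) = w"
  proof
    fix j
    have "(\<Sum>k\<in>UNIV. w k * \<delta> k j) = (\<Sum>k\<in>UNIV. if k = j then w k else 0)"
      unfolding \<delta>_def by (rule sum.cong) auto
    also have "\<dots> = w j" by (simp add: sum.delta')
    finally show "(\<Sum>k\<in>UNIV. w k * \<delta> k j) = w j" .
  qed
  have "f w = (\<Sum>k\<in>UNIV. w k * f (\<delta> k))"
    using ind[of UNIV] eq by simp
  then show ?thesis unfolding \<delta>_def .
qed

lemma riesz_fin:
  fixes a :: "('b::finite \<Rightarrow> real) \<Rightarrow> ('b \<Rightarrow> real) \<Rightarrow> real"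
    and l :: "('b \<Rightarrow> real) \<Rightarrow> real"
  assumes lin1: "\<And>w. \<forall>c x y. a (\<lambda>j. c * x j + y j) w = c * a x w + a y w"
    and sym: "\<And>v w. a v w = a w v"
    and def: "\<And>v. a v v = 0 \<Longrightarrow> v = (\<lambda>_. 0)"
    and linl: "\<forall>c x y. l (\<lambda>j. c * x j + y j) = c * l x + l y"
  shows "\<exists>w. \<forall>\<phi>. a w \<phi> = l \<phi>"
proof -
  define \<delta> :: "'b \<Rightarrow> 'b \<Rightarrow> real" where "\<delta> = (\<lambda>k j. if j = k then 1 else 0)"
  have lin2: "\<forall>c x y. a v (\<lambda>j. c * x j + y j) = c * a v x + a v y" for v
    using lin1[of v] by (simp only: sym[of v]) simp
  define T :: "real^'b \<Rightarrow> real^'b" where "T = (\<lambda>x. \<chi> k. a (\<lambda>j. x $ j) (\<delta> k))"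
  have linT: "linear T"
  proof (rule linearI)
    fix x y :: "real^'b"
    show "T (x + y) = T x + T y"
    proof -
      have "a (\<lambda>j. 1 * x $ j + y $ j) (\<delta> k) = 1 * a (\<lambda>j. x $ j) (\<delta> k) + a (\<lambda>j. y $ j) (\<delta> k)" for k
        by (rule lin1[rule_format])
      moreover have "($) (x + y) = (\<lambda>j. x $ j + y $ j)" by auto
      ultimately show ?thesis unfolding T_def vec_eq_iff by simp
    qed
  next
    fix c :: real and x :: "real^'b"
    show "T (c *\<^sub>R x) = c *\<^sub>R T x"
    proof -
      have "a (\<lambda>j. c * x $ j) (\<delta> k) = c * a (\<lambda>j. x $ j) (\<delta> k)" for k
        by (rule lin_scale[OF lin1])
      moreover have "($) (c *\<^sub>R x) = (\<lambda>j. c * x $ j)" by auto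
      ultimately show ?thesis unfolding T_def vec_eq_iff by simp
    qed
  qed
  have injT: "inj T"
  proof (rule injI)
    fix x y assume eq: "T x = T y"
    define d where "d = (\<lambda>j. x $ j - y $ j)"
    have "a d (\<delta> k) = 0" for k
    proof -
      have "a d (\<delta> k) = a (\<lambda>j. x $ j) (\<delta> k) - a (\<lambda>j. y $ j) (\<delta> k)"
        unfolding d_def by (rule lin_diff[OF lin1])
      also have "\<dots> = 0" using eq unfolding T_def vec_eq_iff by simp
      finally show ?thesis .
    qed
    then have "a d d = 0"
      using lin_expand[OF lin2[of d], of d] unfolding \<delta>_def by simp
    then have "d = (\<lambda>_. 0)" by (rule def)
    then show "x = y" unfolding d_def vec_eq_iff by (metis eq_iff_diff_eq_0)
  qed
  have "surj T" by (rule linear_inj_imp_surj[OF linT injT])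
  then obtain x where x: "T x = (\<chi> k. l (\<delta> k))" by (metis surjD)
  define w where "w = (\<lambda>j. x $ j)"
  have wk: "a w (\<delta> k) = l (\<delta> k)" for k
    using x unfolding T_def w_def vec_eq_iff by simp
  show ?thesis
  proof (intro exI allI)
    fix \<phi>
    have "a w \<phi> = (\<Sum>k\<in>UNIV. \<phi> k * a w (\<delta> k))"
      using lin_expand[OF lin2[of w], of \<phi>] unfolding \<delta>_def by simp
    also have "\<dots> = (\<Sum>k\<in>UNIV. \<phi> k * l (\<delta> k))" using wk by simp
    also have "\<dots> = l \<phi>" using lin_expand[OF linl, of \<phi>] unfolding \<delta>_def by simp
    finally show "a w \<phi> = l \<phi>" .
  qed
qed

lemma cs_unit:
  fixes a :: "('b \<Rightarrow> real) \<Rightarrow> ('b \<Rightarrow> real) \<Rightarrow> real"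
  assumes lin1: "\<And>w. \<forall>c x y. a (\<lambda>j. c * x j + y j) w = c * a x w + a y w"
    and sym: "\<And>v w. a v w = a w v"
    and pos: "\<And>v. 0 \<le> a v v"
    and w1: "a w w = 1"
  shows "a v w \<le> sqrt (a v v)"
proof -
  have lin2: "\<forall>c x y. a u (\<lambda>j. c * x j + y j) = c * a u x + a u y" for u
    using lin1[of u] by (simp only: sym[of u]) simp
  define t where "t = a v w"
  define d where "d = (\<lambda>j. (- t) * w j + v j)"
  have "a d d = (- t) * a w d + a v d" unfolding d_def by (rule lin1[rule_format])
  also have "a w d = (- t) * a w w + a w v" unfolding d_def by (rule lin2[rule_format])
  also have "a v d = (- t) * a v w + a v v" unfolding d_def by (rule lin2[rule_format])
  finally have "a d d = a v v - t\<^sup>2"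
    using w1 sym[of w v] unfolding t_def by (simp add: power2_eq_square algebra_simps)
  then have "t\<^sup>2 \<le> a v v" using pos[of d] by simp
  then have "t \<le> sqrt (a v v)" by (rule real_le_rsqrt)
  then show ?thesis unfolding t_def by simp
qed


lemma PiD_mult:
  fixes \<Theta>s :: "'b::finite \<Rightarrow> 'a::euclidean_space set"
  assumes disj: "disjoint_family \<Theta>s"
  shows "PiD \<Theta>s v x * PiD \<Theta>s w x = (\<Sum>j\<in>UNIV. v j * w j * indicator (\<Theta>s j) x)"
proof (cases "\<exists>k. x \<in> \<Theta>s k")
  case True
  then obtain k where k: "x \<in> \<Theta>s k" by blast
  have ind: "indicator (\<Theta>s j) x = (if j = k then 1 else (0::real))" for j
  proof (cases "j = k")
    case False
    then have "\<Theta>s j \<inter> \<Theta>s k = {}" using disj by (simp add: disjoint_family_on_def)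
    then show ?thesis using k False by (auto simp: indicator_def)
  qed (use k in simp)
  have p: "PiD \<Theta>s f x = f k" for f :: "'b \<Rightarrow> real"
  proof -
    have "PiD \<Theta>s f x = (\<Sum>j\<in>UNIV. if j = k then f j else 0)"
      unfolding PiD_def ind by (rule sum.cong) auto
    then show ?thesis by simp
  qed
  have "(\<Sum>j\<in>UNIV. v j * w j * indicator (\<Theta>s j) x) = (\<Sum>j\<in>UNIV. if j = k then v j * w j else 0)"
    unfolding ind by (rule sum.cong) auto
  then show ?thesis using p by simp
next
  case False
  then have "indicator (\<Theta>s j) x = (0::real)" for j by (auto simp: indicator_def)
  then show ?thesis unfolding PiD_def by simp
qed

lemma PiD_diff: "(\<lambda>x. PiD \<Theta>s a x - PiD \<Theta>s b x) = PiD \<Theta>s (\<lambda>j. a j - b j)"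
  unfolding PiD_def by (rule ext, simp only: sum_subtractf[symmetric] left_diff_distrib)

lemma gd_sets:
  assumes "\<Theta> \<in> lmeasurable" "grad_disc_pc \<Theta> \<Theta>s G"
  shows "\<Theta>s j \<in> sets (lebesgue_on \<Theta>)"
proof -
  have "\<Theta> \<inter> space lebesgue \<in> sets lebesgue" using assms(1) by (simp add: fmeasurableD)
  then show ?thesis using assms(2) unfolding grad_disc_pc_def by (auto simp: sets_restrict_space_iff)
qed

lemma ind_int:
  assumes "\<Theta> \<in> lmeasurable" "grad_disc_pc \<Theta> \<Theta>s G"
  shows "integrable (lebesgue_on \<Theta>) (indicator (\<Theta>s j) :: _ \<Rightarrow> real)"
proof -
  interpret finite_measure "lebesgue_on \<Theta>" using assms(1) by (rule finite_measure_lebesgue_on)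
  show ?thesis
    using gd_sets[OF assms(1,2)] by (intro integrable_const_bound[where B=1]) (auto intro: AE_I2)
qed

lemma M_formula:
  assumes "\<Theta> \<in> lmeasurable" "grad_disc_pc \<Theta> \<Theta>s G"
  shows "innerL2 \<Theta> (PiD \<Theta>s v) (PiD \<Theta>s w)
     = (\<Sum>j\<in>UNIV. (\<integral>x. indicator (\<Theta>s j) x \<partial>lebesgue_on \<Theta>) * v j * w j)"
proof -
  have disj: "disjoint_family \<Theta>s" using assms(2) unfolding grad_disc_pc_def by blast
  have "innerL2 \<Theta> (PiD \<Theta>s v) (PiD \<Theta>s w)
      = (\<integral>x. (\<Sum>j\<in>UNIV. (v j * w j) * indicator (\<Theta>s j) x) \<partial>lebesgue_on \<Theta>)"
    unfolding innerL2_def PiD_mult[OF disj] by simp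
  also have "\<dots> = (\<Sum>j\<in>UNIV. (\<integral>x. (v j * w j) * indicator (\<Theta>s j) x \<partial>lebesgue_on \<Theta>))"
    by (rule Bochner_Integration.integral_sum) (use ind_int[OF assms] in auto)
  also have "\<dots> = (\<Sum>j\<in>UNIV. (\<integral>x. indicator (\<Theta>s j) x \<partial>lebesgue_on \<Theta>) * v j * w j)"
    by (simp add: mult_ac)
  finally show ?thesis .
qed

lemma R_formula:
  assumes "\<Theta> \<in> lmeasurable" "grad_disc_pc \<Theta> \<Theta>s G" "L2 \<Theta> r"
  shows "innerL2 \<Theta> r (PiD \<Theta>s \<phi>)
     = (\<Sum>j\<in>UNIV. \<phi> j * (\<integral>x. r x * indicator (\<Theta>s j) x \<partial>lebesgue_on \<Theta>))"
proof -
  have ri: "integrable (lebesgue_on \<Theta>) (\<lambda>x. r x * indicator (\<Theta>s j) x)" for j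
  proof (rule int_prod_real)
    show "r \<in> borel_measurable (lebesgue_on \<Theta>)" using assms(3) unfolding L2_def by blast
    show "integrable (lebesgue_on \<Theta>) (\<lambda>x. (r x)\<^sup>2)" using assms(3) unfolding L2_def by simp
    show "indicator (\<Theta>s j) \<in> borel_measurable (lebesgue_on \<Theta>)"
      using gd_sets[OF assms(1,2)] by (rule borel_measurable_indicator)
    have "(\<lambda>x. (indicator (\<Theta>s j) x)\<^sup>2) = (indicator (\<Theta>s j) :: _ \<Rightarrow> real)"
      by (auto simp: indicator_def)
    then show "integrable (lebesgue_on \<Theta>) (\<lambda>x. (indicator (\<Theta>s j) x :: real)\<^sup>2)"
      using ind_int[OF assms(1,2)] by simp
  qed
  have "innerL2 \<Theta> r (PiD \<Theta>s \<phi>)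
      = (\<integral>x. (\<Sum>j\<in>UNIV. \<phi> j * (r x * indicator (\<Theta>s j) x)) \<partial>lebesgue_on \<Theta>)"
  proof -
    have "r x * (\<Sum>j\<in>UNIV. \<phi> j * indicator (\<Theta>s j) x) = (\<Sum>j\<in>UNIV. \<phi> j * (r x * indicator (\<Theta>s j) x))" for x
      by (subst sum_distrib_left) (rule sum.cong, auto simp: mult_ac)
    then show ?thesis unfolding innerL2_def PiD_def by (simp only:)
  qed
  also have "\<dots> = (\<Sum>j\<in>UNIV. (\<integral>x. \<phi> j * (r x * indicator (\<Theta>s j) x) \<partial>lebesgue_on \<Theta>))"
    by (rule Bochner_Integration.integral_sum) (use ri in auto)
  also have "\<dots> = (\<Sum>j\<in>UNIV. \<phi> j * (\<integral>x. r x * indicator (\<Theta>s j) x \<partial>lebesgue_on \<Theta>))"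
    by simp
  finally show ?thesis .
qed

lemma G_int:
  assumes "grad_disc_pc \<Theta> \<Theta>s G"
  shows "integrable (lebesgue_on \<Theta>) (\<lambda>x. G v x \<bullet> G w x)"
proof -
  have "L2 \<Theta> (G v)" "L2 \<Theta> (G w)" using assms unfolding grad_disc_pc_def by auto
  then show ?thesis unfolding L2_def by (intro int_prod_vec) auto
qed

lemma A_lin1:
  assumes "grad_disc_pc \<Theta> \<Theta>s G"
  shows "innerL2v \<Theta> (G (\<lambda>j. c * x j + y j)) (G w) = c * innerL2v \<Theta> (G x) (G w) + innerL2v \<Theta> (G y) (G w)"
proof -
  have "G (\<lambda>j. c * x j + y j) = (\<lambda>t. c *\<^sub>R G x t + G y t)"
    using assms unfolding grad_disc_pc_def by blast
  then have "innerL2v \<Theta> (G (\<lambda>j. c * x j + y j)) (G w) = (\<integral>t. c * (G x t \<bullet> G w t) + G y t \<bullet> G w t \<partial>lebesgue_on \<Theta>)"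
    unfolding innerL2v_def by (simp add: inner_add_left)
  also have "\<dots> = c * innerL2v \<Theta> (G x) (G w) + innerL2v \<Theta> (G y) (G w)"
    unfolding innerL2v_def using G_int[OF assms] by simp
  finally show ?thesis .
qed

lemma A_split:
  assumes "grad_disc_pc \<Theta> \<Theta>s G"
  shows "innerL2v \<Theta> (\<lambda>x. L *\<^sub>R G u x - G z x) (G w) = L * innerL2v \<Theta> (G u) (G w) - innerL2v \<Theta> (G z) (G w)"
proof -
  have "innerL2v \<Theta> (\<lambda>x. L *\<^sub>R G u x - G z x) (G w) = (\<integral>t. L * (G u t \<bullet> G w t) - G z t \<bullet> G w t \<partial>lebesgue_on \<Theta>)"
    unfolding innerL2v_def by (simp add: inner_diff_left)
  also have "\<dots> = L * innerL2v \<Theta> (G u) (G w) - innerL2v \<Theta> (G z) (G w)"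
    unfolding innerL2v_def using G_int[OF assms] by simp
  finally show ?thesis .
qed


lemma pw:
  fixes m d L x y z :: real
  assumes "0 \<le> m" "0 \<le> d" "0 \<le> L" "\<bar>L * y - z\<bar> \<le> L * \<bar>y\<bar>"
  shows "m * x * (d * L * y - d * z - d * L * x) \<le> d * L / 2 * m * (y\<^sup>2 - x\<^sup>2)"
proof -
  have "x * (L * y - z) \<le> \<bar>x\<bar> * \<bar>L * y - z\<bar>" by (metis abs_ge_self abs_mult)
  also have "\<dots> \<le> \<bar>x\<bar> * (L * \<bar>y\<bar>)" using assms(4) by (simp add: mult_left_mono)
  also have "\<dots> \<le> L / 2 * (x\<^sup>2 + y\<^sup>2)"
  proof -
    have "0 \<le> (\<bar>x\<bar> - \<bar>y\<bar>)\<^sup>2" by simp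
    then have "2 * (\<bar>x\<bar> * \<bar>y\<bar>) \<le> x\<^sup>2 + y\<^sup>2" by (simp add: power2_eq_square algebra_simps)
    then have "L * (2 * (\<bar>x\<bar> * \<bar>y\<bar>)) \<le> L * (x\<^sup>2 + y\<^sup>2)" using assms(3) by (rule mult_left_mono)
    then show ?thesis by (simp add: algebra_simps)
  qed
  finally have 1: "x * (L * y - z) \<le> L / 2 * (x\<^sup>2 + y\<^sup>2)" .
  have "m * x * (d * L * y - d * z - d * L * x) = m * d * (x * (L * y - z) - L * x\<^sup>2)"
    by (simp add: power2_eq_square algebra_simps)
  also have "\<dots> \<le> m * d * (L / 2 * (x\<^sup>2 + y\<^sup>2) - L * x\<^sup>2)"
    using 1 assms(1,2) by (intro mult_left_mono) auto
  also have "\<dots> = d * L / 2 * m * (y\<^sup>2 - x\<^sup>2)" by (simp add: algebra_simps)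
  finally show ?thesis .
qed

theorem mainTheorem1:
  fixes \<Theta> :: "'a::euclidean_space set"
    and \<Theta>s :: "'b::finite \<Rightarrow> 'a set"
    and G :: "('b \<Rightarrow> real) \<Rightarrow> 'a \<Rightarrow> 'a"
    and \<zeta> :: "real \<Rightarrow> real"
    and dt L L\<^sub>\<zeta> K :: real
    and r :: "'a \<Rightarrow> real"
    and un :: "'b \<Rightarrow> real"
    and u :: "nat \<Rightarrow> 'b \<Rightarrow> real"
  assumes "open \<Theta>" and "bounded \<Theta>"
    and "grad_disc_pc \<Theta> \<Theta>s G"
    and "dt > 0"
    and "mono \<zeta>" and "K-lipschitz_on UNIV \<zeta>" and "\<zeta> 0 = 0"
    and "AE x in lborel. \<zeta> differentiable (at x) \<and> 0 \<le> deriv \<zeta> x \<and> deriv \<zeta> x \<le> L\<^sub>\<zeta>"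
    and "L \<ge> L\<^sub>\<zeta> / 2"
    and "L2 \<Theta> r"
    and "\<forall>\<phi>. innerL2 \<Theta> (PiD \<Theta>s un) (PiD \<Theta>s \<phi>)
              + dt * innerL2v \<Theta> (G (\<zeta> \<circ> un)) (G \<phi>) = innerL2 \<Theta> r (PiD \<Theta>s \<phi>)"
    and "\<forall>i\<ge>1. \<forall>\<phi>. innerL2 \<Theta> (PiD \<Theta>s (u i)) (PiD \<Theta>s \<phi>)
              + dt * L * innerL2v \<Theta> (G (u i)) (G \<phi>)
            = dt * innerL2v \<Theta> (\<lambda>x. L *\<^sub>R G (u (i - 1)) x - G (\<zeta> \<circ> u (i - 1)) x) (G \<phi>)
              + innerL2 \<Theta> r (PiD \<Theta>s \<phi>)"
  shows "(\<lambda>i. dual_normD \<Theta> \<Theta>s G (\<lambda>x. PiD \<Theta>s (u i) x - PiD \<Theta>s un x)) \<longlonglongrightarrow> 0"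
proof -
  note gd = assms(3)
  have Tlm: "\<Theta> \<in> lmeasurable" using assms(1,2) by (simp add: lmeasurable_open)
  have Gdef: "\<And>v. innerL2v \<Theta> (G v) (G v) = 0 \<Longrightarrow> v = (\<lambda>_. 0)"
    using gd unfolding grad_disc_pc_def by blast
  define a where "a = (\<lambda>v w. innerL2v \<Theta> (G v) (G w))"
  define \<mu> where "\<mu> = (\<lambda>j. \<integral>x. indicator (\<Theta>s j) x \<partial>lebesgue_on \<Theta> :: real)"
  define \<rho> where "\<rho> = (\<lambda>j. \<integral>x. r x * indicator (\<Theta>s j) x \<partial>lebesgue_on \<Theta>)"
  have aeq: "\<And>v w. innerL2v \<Theta> (G v) (G w) = a v w" by (simp add: a_def)
  have alin1: "\<And>w. \<forall>c x y. a (\<lambda>j. c * x j + y j) w = c * a x w + a y w"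
    unfolding a_def using A_lin1[OF gd] by blast
  have asym: "\<And>v w. a v w = a w v" unfolding a_def innerL2v_def by (simp add: inner_commute)
  have apos: "\<And>v. 0 \<le> a v v" unfolding a_def innerL2v_def
    by (rule Bochner_Integration.integral_nonneg) simp
  have adef: "\<And>v. a v v = 0 \<Longrightarrow> v = (\<lambda>_. 0)" unfolding a_def by (rule Gdef)
  have alin2: "\<forall>c x y. a v (\<lambda>j. c * x j + y j) = c * a v x + a v y" for v
    using alin1[of v] by (simp only: asym[of v]) simp
  have ascale: "\<And>c x y. a (\<lambda>j. c * x j) y = c * a x y" by (rule lin_scale[OF alin1])
  have ascale2: "\<And>c x y. a y (\<lambda>j. c * x j) = c * a y x" by (rule lin_scale[OF alin2])
  have Mf: "\<And>v w. innerL2 \<Theta> (PiD \<Theta>s v) (PiD \<Theta>s w) = (\<Sum>j\<in>UNIV. \<mu> j * v j * w j)"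
    unfolding \<mu>_def by (rule M_formula[OF Tlm gd])
  have Rf: "\<And>\<phi>. innerL2 \<Theta> r (PiD \<Theta>s \<phi>) = (\<Sum>j\<in>UNIV. \<phi> j * \<rho> j)"
    unfolding \<rho>_def by (rule R_formula[OF Tlm gd assms(10)])
  have \<mu>pos: "\<And>j. 0 \<le> \<mu> j" unfolding \<mu>_def by (rule Bochner_Integration.integral_nonneg) simp
  have slope: "\<And>p q. q \<le> p \<Longrightarrow> \<zeta> p - \<zeta> q \<le> L\<^sub>\<zeta> * (p - q)"
    by (rule slope_bound[OF assms(5) assms(6) assms(8)])
  have zmono: "\<And>p q. q \<le> p \<Longrightarrow> \<zeta> q \<le> \<zeta> p" using assms(5) by (simp add: mono_def)
  have Lz0: "0 \<le> L\<^sub>\<zeta>" using slope[of 0 1] zmono[of 0 1] by simp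
  have L0: "0 \<le> L" using assms(9) Lz0 by simp
  have zb1: "\<bar>L * (p - q) - (\<zeta> p - \<zeta> q)\<bar> \<le> L * \<bar>p - q\<bar>" if "q \<le> p" for p q
  proof -
    have "L\<^sub>\<zeta> * (p - q) \<le> 2 * L * (p - q)" using assms(9) that by (intro mult_right_mono) auto
    then show ?thesis using slope[OF that] zmono[OF that] that by (simp add: abs_le_iff)
  qed
  have zb: "\<bar>L * (p - q) - (\<zeta> p - \<zeta> q)\<bar> \<le> L * \<bar>p - q\<bar>" for p q
  proof (cases "q \<le> p")
    case True then show ?thesis by (rule zb1)
  next
    case False
    then have "\<bar>L * (q - p) - (\<zeta> q - \<zeta> p)\<bar> \<le> L * \<bar>q - p\<bar>" by (intro zb1) auto
    then show ?thesis by (simp add: abs_minus_commute algebra_simps)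
  qed
  define e where "e = (\<lambda>i j. u i j - un j)"
  have lfun: "\<forall>c x y. (\<Sum>j\<in>UNIV. \<mu> j * e i j * (c * x j + y j)) = c * (\<Sum>j\<in>UNIV. \<mu> j * e i j * x j) + (\<Sum>j\<in>UNIV. \<mu> j * e i j * y j)" for i
  proof (intro allI)
    fix c x y
    have "(\<Sum>j\<in>UNIV. \<mu> j * e i j * (c * x j + y j)) = (\<Sum>j\<in>UNIV. c * (\<mu> j * e i j * x j) + \<mu> j * e i j * y j)"
      by (rule sum.cong) (simp_all add: algebra_simps)
    then show "(\<Sum>j\<in>UNIV. \<mu> j * e i j * (c * x j + y j)) = c * (\<Sum>j\<in>UNIV. \<mu> j * e i j * x j) + (\<Sum>j\<in>UNIV. \<mu> j * e i j * y j)"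
      by (simp add: sum.distrib sum_distrib_left)
  qed
  have "\<forall>i. \<exists>w. \<forall>\<phi>. a w \<phi> = (\<Sum>j\<in>UNIV. \<mu> j * e i j * \<phi> j)"
  proof
    fix i show "\<exists>w. \<forall>\<phi>. a w \<phi> = (\<Sum>j\<in>UNIV. \<mu> j * e i j * \<phi> j)"
      by (rule riesz_fin[where l="\<lambda>\<phi>. \<Sum>j\<in>UNIV. \<mu> j * e i j * \<phi> j", OF alin1 asym adef lfun[of i]])
  qed
  then obtain W where W: "\<And>i \<phi>. a (W i) \<phi> = (\<Sum>j\<in>UNIV. \<mu> j * e i j * \<phi> j)" by metis
  define Q where "Q = (\<lambda>i. \<Sum>j\<in>UNIV. \<mu> j * (e i j)\<^sup>2)"
  have key: "a (W (Suc n)) (W (Suc n)) \<le> dt * L / 2 * (Q n - Q (Suc n))" for n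
  proof -
    define w where "w = W (Suc n)"
    define S where "S = (\<lambda>x. \<Sum>j\<in>UNIV. \<mu> j * e (Suc n) j * x j)"
    have aW: "\<And>x. a x w = S x" unfolding w_def S_def using W asym by metis
    have H1: "innerL2 \<Theta> (PiD \<Theta>s (u (Suc n))) (PiD \<Theta>s w) + dt * L * innerL2v \<Theta> (G (u (Suc n))) (G w)
            = dt * innerL2v \<Theta> (\<lambda>x. L *\<^sub>R G (u (Suc n - 1)) x - G (\<zeta> \<circ> u (Suc n - 1)) x) (G w)
              + innerL2 \<Theta> r (PiD \<Theta>s w)"
      using assms(12) by simp
    have H0: "innerL2 \<Theta> (PiD \<Theta>s un) (PiD \<Theta>s w) + dt * innerL2v \<Theta> (G (\<zeta> \<circ> un)) (G w) = innerL2 \<Theta> r (PiD \<Theta>s w)"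
      using assms(11) by simp
    have H1': "(\<Sum>j\<in>UNIV. \<mu> j * u (Suc n) j * w j) + dt * L * S (u (Suc n))
            = dt * (L * S (u n) - S (\<zeta> \<circ> u n)) + (\<Sum>j\<in>UNIV. w j * \<rho> j)"
      using H1 by (simp only: diff_Suc_1 A_split[OF gd] Mf Rf aeq aW)
    have H0': "(\<Sum>j\<in>UNIV. \<mu> j * un j * w j) + dt * S (\<zeta> \<circ> un) = (\<Sum>j\<in>UNIV. w j * \<rho> j)"
      using H0 by (simp only: Mf Rf aeq aW)
    have aww: "a w w = (\<Sum>j\<in>UNIV. \<mu> j * u (Suc n) j * w j) - (\<Sum>j\<in>UNIV. \<mu> j * un j * w j)"
      unfolding aW S_def e_def by (simp add: sum_subtractf[symmetric] algebra_simps)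
    have "a w w = dt * L * S (u n) - dt * S (\<zeta> \<circ> u n) + dt * S (\<zeta> \<circ> un) - dt * L * S (u (Suc n))"
      using aww H1' H0' by (simp add: algebra_simps)
    also have "\<dots> = (\<Sum>j\<in>UNIV. dt * L * (\<mu> j * e (Suc n) j * u n j) - dt * (\<mu> j * e (Suc n) j * \<zeta> (u n j))
                 + dt * (\<mu> j * e (Suc n) j * \<zeta> (un j)) - dt * L * (\<mu> j * e (Suc n) j * u (Suc n) j))"
      unfolding S_def by (simp add: sum_distrib_left sum_subtractf sum.distrib)
    also have "\<dots> = (\<Sum>j\<in>UNIV. \<mu> j * e (Suc n) j * (dt * L * e n j - dt * (\<zeta> (u n j) - \<zeta> (un j)) - dt * L * e (Suc n) j))"
      unfolding e_def by (rule sum.cong) (simp_all add: algebra_simps)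
    also have "\<dots> \<le> (\<Sum>j\<in>UNIV. dt * L / 2 * \<mu> j * ((e n j)\<^sup>2 - (e (Suc n) j)\<^sup>2))"
    proof (rule sum_mono)
      fix j
      have "\<bar>L * e n j - (\<zeta> (u n j) - \<zeta> (un j))\<bar> \<le> L * \<bar>e n j\<bar>"
        unfolding e_def by (rule zb)
      then show "\<mu> j * e (Suc n) j * (dt * L * e n j - dt * (\<zeta> (u n j) - \<zeta> (un j)) - dt * L * e (Suc n) j)
           \<le> dt * L / 2 * \<mu> j * ((e n j)\<^sup>2 - (e (Suc n) j)\<^sup>2)"
        using pw[OF \<mu>pos[of j] _ L0, of dt "e n j" "\<zeta> (u n j) - \<zeta> (un j)" "e (Suc n) j"] assms(4)
        by (simp add: right_diff_distrib)
    qed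
    also have "\<dots> = dt * L / 2 * (Q n - Q (Suc n))"
      unfolding Q_def by (simp add: sum_distrib_left sum_subtractf algebra_simps)
    finally show ?thesis unfolding w_def .
  qed
  define D where "D = (\<lambda>n. dt * L / 2 * Q n)"
  have Q0: "0 \<le> Q n" for n unfolding Q_def by (intro sum_nonneg) (simp add: \<mu>pos)
  have D0: "0 \<le> D n" for n using Q0[of n] L0 assms(4) unfolding D_def by simp
  have key': "a (W (Suc n)) (W (Suc n)) \<le> D n - D (Suc n)" for n
    using key[of n] unfolding D_def by (simp add: algebra_simps)
  have dec: "decseq D" unfolding decseq_Suc_iff
  proof
    fix n show "D (Suc n) \<le> D n" using key'[of n] apos[of "W (Suc n)"] by simp
  qed
  obtain l where l: "D \<longlonglongrightarrow> l" using decseq_convergent[OF dec, of 0] D0 by blast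
  have "(\<lambda>n. D n - D (Suc n)) \<longlonglongrightarrow> l - l"
    by (intro tendsto_diff l) (use l LIMSEQ_Suc in blast)
  then have dD: "(\<lambda>n. D n - D (Suc n)) \<longlonglongrightarrow> 0" by simp
  have "(\<lambda>n. a (W (Suc n)) (W (Suc n))) \<longlonglongrightarrow> 0"
    by (rule tendsto_sandwich[of "\<lambda>_. 0" _ _ "\<lambda>n. D n - D (Suc n)"]) (use apos key' dD in auto)
  then have "(\<lambda>n. a (W n) (W n)) \<longlonglongrightarrow> 0" by (rule LIMSEQ_imp_Suc)
  then have sq: "(\<lambda>n. sqrt (a (W n) (W n))) \<longlonglongrightarrow> 0" using tendsto_real_sqrt[of _ 0] by simp
  define \<delta>0 where "\<delta>0 = (\<lambda>j::'b. if j = undefined then 1 else (0::real))"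
  have "\<delta>0 \<noteq> (\<lambda>_. 0)" unfolding \<delta>0_def by (metis one_neq_zero)
  then have apd: "0 < a \<delta>0 \<delta>0" using apos[of \<delta>0] adef[of \<delta>0] by fastforce
  define c0 where "c0 = 1 / sqrt (a \<delta>0 \<delta>0)"
  define w0 where "w0 = (\<lambda>j. c0 * \<delta>0 j)"
  define w1 where "w1 = (\<lambda>j. (- c0) * \<delta>0 j)"
  have c0sq: "c0 * (c0 * a \<delta>0 \<delta>0) = 1"
  proof -
    have "sqrt (a \<delta>0 \<delta>0) * sqrt (a \<delta>0 \<delta>0) = a \<delta>0 \<delta>0" using apd by simp
    then show ?thesis unfolding c0_def using apd by (simp add: field_simps)
  qed
  have w0n: "a w0 w0 = 1" unfolding w0_def using c0sq by (simp add: ascale ascale2)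
  have w1n: "a w1 w1 = 1" unfolding w1_def by (simp only: ascale ascale2) (use c0sq in simp)
  have aw1: "a v w1 = - a v w0" for v unfolding w0_def w1_def by (simp only: ascale2)
  have bound: "0 \<le> dual_normD \<Theta> \<Theta>s G (\<lambda>x. PiD \<Theta>s (u i) x - PiD \<Theta>s un x)
      \<and> dual_normD \<Theta> \<Theta>s G (\<lambda>x. PiD \<Theta>s (u i) x - PiD \<Theta>s un x) \<le> sqrt (a (W i) (W i))" for i
  proof -
    define Si where "Si = {innerL2 \<Theta> (\<lambda>x. PiD \<Theta>s (u i) x - PiD \<Theta>s un x) (PiD \<Theta>s w) | w. sqrt (innerL2v \<Theta> (G w) (G w)) = 1}"
    have inner_eq: "innerL2 \<Theta> (\<lambda>x. PiD \<Theta>s (u i) x - PiD \<Theta>s un x) (PiD \<Theta>s w) = a (W i) w" for w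
      unfolding PiD_diff Mf W e_def ..
    have Seq: "Si = {a (W i) w | w. a w w = 1}"
      unfolding Si_def inner_eq aeq real_sqrt_eq_1_iff ..
    have ub: "s \<le> sqrt (a (W i) (W i))" if "s \<in> Si" for s
    proof -
      from that obtain w where "s = a (W i) w" "a w w = 1" unfolding Seq by blast
      then show ?thesis using cs_unit[OF alin1 asym apos, of w "W i"] by simp
    qed
    have in0: "a (W i) w0 \<in> Si" unfolding Seq using w0n by blast
    have in1: "- a (W i) w0 \<in> Si"
    proof -
      have "a (W i) w1 \<in> Si" unfolding Seq using w1n by blast
      then show ?thesis by (simp only: aw1)
    qed
    have bdd: "bdd_above Si" using ub by (intro bdd_aboveI[where M="sqrt (a (W i) (W i))"]) blast
    have le: "Sup Si \<le> sqrt (a (W i) (W i))" using in0 ub by (intro cSup_least) auto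
    have "a (W i) w0 \<le> Sup Si" "- a (W i) w0 \<le> Sup Si"
      using cSup_upper[OF in0 bdd] cSup_upper[OF in1 bdd] by auto
    then have "0 \<le> Sup Si" by linarith
    then show ?thesis using le unfolding dual_normD_def Si_def by simp
  qed
  show ?thesis
    by (rule tendsto_sandwich[of "\<lambda>_. 0" _ _ "\<lambda>i. sqrt (a (W i) (W i))"]) (use bound sq in auto)
qed

end
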